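(* For every $k\ge1$, the element $[c_k,x_2]=c_kx_2-x_2c_k$ does not belong to $S_m$ for any $m\ge1$.
   Context: $K$ is a field of characteristic zero and $K\langle x_2,x_3\rangle$ is the free associative $K$-algebra with unity. $[a,b]=ab-ba$; $c_1=[x_2,x_3]$, $c_{k+1}=[c_k,x_3]$ for $k\ge1$. Let $V$ be the group of automorphisms $\varphi=(x_2+g(x_3),\,x_3+h)$ of $K\langle x_2,x_3\rangle$ with $g\in K\langle x_3\rangle$, $h\in K$, and write $f^\varphi=f(x_2+g(x_3),x_3+h)$. Define $S_1=S=\{f\in K\langle x_2,x_3\rangle\mid f^\varphi=f\ \forall\varphi\in V\}$ and $S_{m+1}=\{f\in K\langle x_2,x_3\rangle\mid f^\varphi-f\in S_m\ \forall\varphi\in V\}$ for $m\ge1$. *)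

theory Defs
  imports Main "HOL-Library.Poly_Mapping"
begin

text \<open>The free associative algebra K<x2,x3> with unity, realised as finitely supported
  K-valued functions on words (lists) over the two-letter alphabet {x2, x3}.\<close>

datatype var = X2 | X3

type_synonym 'k ncpoly = "var list \<Rightarrow>\<^sub>0 'k"

definition ncconst :: "'k::field \<Rightarrow> 'k ncpoly" where
  "ncconst a = Poly_Mapping.single [] a"

definition ncvar :: "var \<Rightarrow> 'k::field ncpoly" where
  "ncvar v = Poly_Mapping.single [v] 1"

definition ncmult :: "'k::field ncpoly \<Rightarrow> 'k ncpoly \<Rightarrow> 'k ncpoly" where
  "ncmult p q = (\<Sum>w\<in>Poly_Mapping.keys p. \<Sum>u\<in>Poly_Mapping.keys q.
                   Poly_Mapping.single (w @ u) (Poly_Mapping.lookup p w * Poly_Mapping.lookup q u))"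

definition nccomm :: "'k::field ncpoly \<Rightarrow> 'k ncpoly \<Rightarrow> 'k ncpoly" where
  "nccomm a b = ncmult a b - ncmult b a"

definition wordval :: "(var \<Rightarrow> 'k::field ncpoly) \<Rightarrow> var list \<Rightarrow> 'k ncpoly" where
  "wordval \<sigma> w = foldr (\<lambda>a r. ncmult (\<sigma> a) r) w (ncconst 1)"

definition ncsubst :: "(var \<Rightarrow> 'k::field ncpoly) \<Rightarrow> 'k ncpoly \<Rightarrow> 'k ncpoly" where
  "ncsubst \<sigma> p = (\<Sum>w\<in>Poly_Mapping.keys p. ncmult (ncconst (Poly_Mapping.lookup p w)) (wordval \<sigma> w))"

definition in_Kx3 :: "'k::field ncpoly \<Rightarrow> bool" where
  "in_Kx3 g \<longleftrightarrow> (\<forall>w\<in>Poly_Mapping.keys g. set w \<subseteq> {X3})"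

text \<open>the group V of automorphisms (x2 + g(x3), x3 + h), represented by their action on generators\<close>
definition Vgrp :: "(var \<Rightarrow> 'k::field ncpoly) set" where
  "Vgrp = {\<sigma>. \<exists>g h. in_Kx3 g \<and>
      \<sigma> = (\<lambda>v. case v of X2 \<Rightarrow> ncvar X2 + g | X3 \<Rightarrow> ncvar X3 + ncconst h)}"

text \<open>c_1 = [x2,x3], c_{k+1} = [c_k, x3] (c 0 is unused)\<close>
fun cc :: "nat \<Rightarrow> 'k::field ncpoly" where
  "cc 0 = 0"
| "cc (Suc 0) = nccomm (ncvar X2) (ncvar X3)"
| "cc (Suc (Suc k)) = nccomm (cc (Suc k)) (ncvar X3)"

text \<open>S_1 = S, S_{m+1} (S 0 is unused)\<close>
fun Sm :: "nat \<Rightarrow> 'k::field ncpoly set" where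
  "Sm 0 = {}"
| "Sm (Suc 0) = {f. \<forall>\<phi>\<in>Vgrp. ncsubst \<phi> f = f}"
| "Sm (Suc (Suc m)) = {f. \<forall>\<phi>\<in>Vgrp. ncsubst \<phi> f - f \<in> Sm (Suc m)}"

end

theory Submission imports Defs begin

instantiation list :: (type) monoid_add
begin
definition zero_list :: "'a list" where "zero_list = []"
definition plus_list :: "'a list \<Rightarrow> 'a list \<Rightarrow> 'a list" where "plus_list xs ys = xs @ ys"
instance by standard (auto simp: zero_list_def plus_list_def)
end

lemma list_zero_eq: "(0::'a list) = []" by (simp add: zero_list_def)
lemma list_plus_eq: "(xs::'a list) + ys = xs @ ys" by (simp add: plus_list_def)

lemma mult_single_list:
  "Poly_Mapping.single (w::'a list) a * Poly_Mapping.single u b = Poly_Mapping.single (w @ u) (a * b)"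
  by (simp add: mult_single list_plus_eq)

lemma pm_expand: "p = (\<Sum>w\<in>Poly_Mapping.keys p. Poly_Mapping.single w (Poly_Mapping.lookup p w))"
proof -
  have "Poly_Mapping.lookup p x = Poly_Mapping.lookup (\<Sum>w\<in>Poly_Mapping.keys p. Poly_Mapping.single w (Poly_Mapping.lookup p w)) x" for x
    by (simp add: lookup_sum lookup_single when_def in_keys_iff sum.delta)
  then have "Poly_Mapping.lookup p = Poly_Mapping.lookup (\<Sum>w\<in>Poly_Mapping.keys p. Poly_Mapping.single w (Poly_Mapping.lookup p w))"
    by (rule ext)
  then show ?thesis by (simp only: poly_mapping_eq_iff)
qed

lemma ncmult_eq: "ncmult p q = p * (q :: 'k::field ncpoly)"
proof -
  have "ncmult p q = (\<Sum>w\<in>Poly_Mapping.keys p. \<Sum>u\<in>Poly_Mapping.keys q.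
     Poly_Mapping.single w (Poly_Mapping.lookup p w) * Poly_Mapping.single u (Poly_Mapping.lookup q u))"
    by (simp add: ncmult_def mult_single_list)
  also have "\<dots> = (\<Sum>w\<in>Poly_Mapping.keys p. Poly_Mapping.single w (Poly_Mapping.lookup p w)) *
      (\<Sum>u\<in>Poly_Mapping.keys q. Poly_Mapping.single u (Poly_Mapping.lookup q u))"
    by (simp only: sum_distrib_right) (simp only: sum_distrib_left)
  also have "\<dots> = p * q" by (simp flip: pm_expand)
  finally show ?thesis .
qed

lemma ncconst_eq: "ncconst a = Poly_Mapping.single [] a" by (simp add: ncconst_def)
lemma one_eq: "(1::'k::field ncpoly) = Poly_Mapping.single [] 1" by (metis single_one list_zero_eq)
lemma wordval_eq: "wordval \<sigma> w = prod_list (map \<sigma> w)"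
  by (induction w) (simp_all add: wordval_def ncmult_eq ncconst_eq flip: one_eq)

lemma central: "Poly_Mapping.single [] (a::'k::field) * x = x * Poly_Mapping.single [] a"
proof -
  have "Poly_Mapping.single [] a * x = (\<Sum>w\<in>Poly_Mapping.keys x. Poly_Mapping.single [] a * Poly_Mapping.single w (Poly_Mapping.lookup x w))"
    by (subst pm_expand[of x]) (simp add: sum_distrib_left)
  also have "\<dots> = (\<Sum>w\<in>Poly_Mapping.keys x. Poly_Mapping.single w (Poly_Mapping.lookup x w) * Poly_Mapping.single [] a)"
    by (simp add: mult_single_list mult.commute)
  also have "\<dots> = x * Poly_Mapping.single [] a"
    by (subst (2) pm_expand[of x]) (simp add: sum_distrib_right)
  finally show ?thesis .
qed

lemma ncsubst_eq: "ncsubst \<sigma> p = (\<Sum>w\<in>Poly_Mapping.keys p. Poly_Mapping.single [] (Poly_Mapping.lookup p w) * prod_list (map \<sigma> w))"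
  by (simp add: ncsubst_def ncmult_eq ncconst_eq wordval_eq)

lemma ncsubst_sup: assumes "finite A" "Poly_Mapping.keys p \<subseteq> A"
  shows "ncsubst \<sigma> p = (\<Sum>w\<in>A. Poly_Mapping.single [] (Poly_Mapping.lookup p w) * prod_list (map \<sigma> (w::var list)))"
  unfolding ncsubst_eq
  by (rule sum.mono_neutral_left) (use assms in \<open>auto simp: in_keys_iff\<close>)

lemma ncsubst_add: "ncsubst \<sigma> (p + q) = ncsubst \<sigma> p + ncsubst \<sigma> (q::'k::field ncpoly)"
proof -
  let ?A = "Poly_Mapping.keys p \<union> Poly_Mapping.keys q"
  have f: "finite ?A" by simp
  have "Poly_Mapping.keys (p+q) \<subseteq> ?A" by (rule keys_add)
  then show ?thesis
    by (simp add: ncsubst_sup[OF f] ncsubst_sup[OF f, of p] ncsubst_sup[OF f, of q]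
        lookup_add single_add distrib_right sum.distrib)
qed

lemma ncsubst_diff: "ncsubst \<sigma> (p - q) = ncsubst \<sigma> p - ncsubst \<sigma> (q::'k::field ncpoly)"
  by (metis add_diff_cancel ncsubst_add diff_add_cancel)

lemma ncsubst_zero: "ncsubst \<sigma> 0 = 0"
  by (simp add: ncsubst_eq)

lemma ncsubst_sum: "ncsubst \<sigma> (\<Sum>i\<in>I. f i) = (\<Sum>i\<in>I. ncsubst \<sigma> (f i :: 'k::field ncpoly))"
  by (induction I rule: infinite_finite_induct) (simp_all add: ncsubst_zero ncsubst_add)

lemma ncsubst_single: "ncsubst \<sigma> (Poly_Mapping.single w a) = Poly_Mapping.single [] (a::'k::field) * prod_list (map \<sigma> w)"
  by (subst ncsubst_sup[of "{w}"]) auto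

lemma ncsubst_mult: "ncsubst \<sigma> (p * q) = ncsubst \<sigma> p * ncsubst \<sigma> (q::'k::field ncpoly)"
proof -
  have "p * q = (\<Sum>w\<in>Poly_Mapping.keys p. \<Sum>u\<in>Poly_Mapping.keys q.
     Poly_Mapping.single (w@u) (Poly_Mapping.lookup p w * Poly_Mapping.lookup q u))"
    by (simp flip: ncmult_eq add: ncmult_def)
  then have "ncsubst \<sigma> (p * q) = (\<Sum>w\<in>Poly_Mapping.keys p. \<Sum>u\<in>Poly_Mapping.keys q.
     (Poly_Mapping.single [] (Poly_Mapping.lookup p w) * prod_list (map \<sigma> w)) *
     (Poly_Mapping.single [] (Poly_Mapping.lookup q u) * prod_list (map \<sigma> u)))"
  proof (simp add: ncsubst_sum ncsubst_single)
    have "Poly_Mapping.single [] (a * b) * (prod_list (map \<sigma> w) * prod_list (map \<sigma> u)) =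
       Poly_Mapping.single [] a * prod_list (map \<sigma> w) * (Poly_Mapping.single [] b * prod_list (map \<sigma> u))"
      for a b :: 'k and w u
    proof -
      have "Poly_Mapping.single [] (a * b) = (Poly_Mapping.single [] a * Poly_Mapping.single [] b :: 'k ncpoly)"
        by (simp add: mult_single_list)
      then have "Poly_Mapping.single [] (a * b) * (prod_list (map \<sigma> w) * prod_list (map \<sigma> u)) =
          Poly_Mapping.single [] a * ((Poly_Mapping.single [] b * prod_list (map \<sigma> w)) * prod_list (map \<sigma> u))"
        by (simp only: mult.assoc)
      also have "Poly_Mapping.single [] b * prod_list (map \<sigma> w) = prod_list (map \<sigma> w) * Poly_Mapping.single [] b"
        by (rule central)
      finally show ?thesis by (simp add: mult.assoc)
    qed
    then show "(\<Sum>w\<in>Poly_Mapping.keys p. \<Sum>u\<in>Poly_Mapping.keys q.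
        Poly_Mapping.single [] (Poly_Mapping.lookup p w * Poly_Mapping.lookup q u) *
        (prod_list (map \<sigma> w) * prod_list (map \<sigma> u))) =
      (\<Sum>w\<in>Poly_Mapping.keys p. \<Sum>u\<in>Poly_Mapping.keys q.
        Poly_Mapping.single [] (Poly_Mapping.lookup p w) * prod_list (map \<sigma> w) *
        (Poly_Mapping.single [] (Poly_Mapping.lookup q u) * prod_list (map \<sigma> u)))"
      by simp
  qed
  also have "\<dots> = ncsubst \<sigma> p * ncsubst \<sigma> q"
    unfolding ncsubst_eq by (simp only: sum_distrib_right) (simp only: sum_distrib_left)
  finally show ?thesis .
qed


lemma ncsubst_const: "ncsubst \<sigma> (Poly_Mapping.single [] c) = Poly_Mapping.single [] (c::'k::field)"
  by (simp add: ncsubst_single flip: one_eq)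

lemma ncsubst_one: "ncsubst \<sigma> (1::'k::field ncpoly) = 1"
  by (simp add: one_eq ncsubst_const)

lemma ncsubst_of_nat: "ncsubst \<sigma> (of_nat n :: 'k::field ncpoly) = of_nat n"
  by (induction n) (simp_all add: ncsubst_zero ncsubst_add ncsubst_one)

lemma ncsubst_var: "ncsubst \<sigma> (ncvar v :: 'k::field ncpoly) = \<sigma> v"
  by (simp add: ncvar_def ncsubst_single flip: one_eq)

lemma nccomm_eq: "nccomm a b = a * b - b * (a::'k::field ncpoly)"
  by (simp add: nccomm_def ncmult_eq)

lemma ncsubst_comm: "ncsubst \<sigma> (nccomm a b) = nccomm (ncsubst \<sigma> a) (ncsubst \<sigma> (b::'k::field ncpoly))"
  by (simp add: nccomm_eq ncsubst_diff ncsubst_mult)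

lemma ncconst_central: "ncconst c * x = x * (ncconst c :: 'k::field ncpoly)"
  by (simp add: ncconst_eq central)

lemma cc_fix:
  fixes \<sigma> :: "var \<Rightarrow> 'k::field ncpoly"
  assumes s2: "\<sigma> X2 = ncvar X2 + g" and s3: "\<sigma> X3 = ncvar X3 + ncconst c"
    and gY: "g * ncvar X3 = ncvar X3 * g"
  shows "k \<ge> 1 \<Longrightarrow> ncsubst \<sigma> (cc k) = cc k"
proof (induction k rule: cc.induct)
  case 1 then show ?case by simp
next
  case 2
  have "ncsubst \<sigma> (cc (Suc 0)) = nccomm (ncvar X2 + g) (ncvar X3 + ncconst c)"
    by (simp add: ncsubst_comm ncsubst_var s2 s3)
  also have "\<dots> = nccomm (ncvar X2) (ncvar X3)"
    using gY ncconst_central[of c "ncvar X2"] ncconst_central[of c g]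
    by (simp add: nccomm_eq algebra_simps)
  finally show ?case by simp
next
  case (3 k)
  have "ncsubst \<sigma> (cc (Suc (Suc k))) = nccomm (cc (Suc k)) (ncvar X3 + ncconst c)"
    using 3 by (simp add: ncsubst_comm ncsubst_var s3)
  also have "\<dots> = nccomm (cc (Suc k)) (ncvar X3)"
    using ncconst_central[of c "cc (Suc k)"]
    by (simp add: nccomm_eq algebra_simps)
  finally show ?case by simp
qed

fun qq :: "nat \<Rightarrow> 'k::field ncpoly" where
  "qq 0 = 1"
| "qq (Suc n) = qq n * (ncvar X3 - of_nat n)"

lemma qq_Y: "qq n * ncvar X3 = ncvar X3 * (qq n :: 'k::field ncpoly)"
proof (induction n)
  case 0 then show ?case by simp
next
  case (Suc n)
  have "qq (Suc n) * ncvar X3 = qq n * (ncvar X3 * ncvar X3 - of_nat n * (ncvar X3 :: 'k ncpoly))"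
    by (simp add: algebra_simps)
  also have "\<dots> = qq n * ncvar X3 * (ncvar X3 - of_nat n)"
    by (simp add: algebra_simps mult_of_nat_commute)
  also have "\<dots> = ncvar X3 * qq (Suc n)" by (subst Suc.IH) (simp add: mult.assoc)
  finally show ?case .
qed

lemma in_Kx3_mult: "in_Kx3 p \<Longrightarrow> in_Kx3 q \<Longrightarrow> in_Kx3 (p * (q::'k::field ncpoly))"
  unfolding in_Kx3_def using keys_mult[of p q] by (fastforce simp: list_plus_eq)

lemma in_Kx3_diff: "in_Kx3 p \<Longrightarrow> in_Kx3 q \<Longrightarrow> in_Kx3 (p - (q::'k::field ncpoly))"
  unfolding in_Kx3_def using keys_diff[of p q] by blast

lemma in_Kx3_const: "in_Kx3 (Poly_Mapping.single [] (c::'k::field))"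
  unfolding in_Kx3_def by simp

lemma in_Kx3_of_nat: "in_Kx3 (of_nat n :: 'k::field ncpoly)"
  using in_Kx3_const[of "of_nat n :: 'k"] by (simp add: list_zero_eq[symmetric])

lemma in_Kx3_Y: "in_Kx3 (ncvar X3 :: 'k::field ncpoly)"
  unfolding in_Kx3_def ncvar_def by simp

lemma in_Kx3_qq: "in_Kx3 (qq n :: 'k::field ncpoly)"
proof (induction n)
  case 0 then show ?case using in_Kx3_of_nat[of 1] by simp
next
  case (Suc n) then show ?case by (simp add: in_Kx3_mult in_Kx3_diff in_Kx3_Y in_Kx3_of_nat)
qed

definition tau :: "var \<Rightarrow> 'k::field ncpoly" where
  "tau = (\<lambda>v. case v of X2 \<Rightarrow> ncvar X2 + 0 | X3 \<Rightarrow> ncvar X3 + ncconst 1)"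

definition phi :: "nat \<Rightarrow> var \<Rightarrow> 'k::field ncpoly" where
  "phi n = (\<lambda>v. case v of X2 \<Rightarrow> ncvar X2 + qq n | X3 \<Rightarrow> ncvar X3 + ncconst 0)"

lemma in_Kx3_zero: "in_Kx3 (0::'k::field ncpoly)" by (simp add: in_Kx3_def)

lemma tau_V: "tau \<in> Vgrp"
  unfolding Vgrp_def tau_def using in_Kx3_zero by blast

lemma phi_V: "phi n \<in> Vgrp"
  unfolding Vgrp_def phi_def using in_Kx3_qq by blast

lemma tau_Y: "ncsubst tau (ncvar X3) = ncvar X3 + (1::'k::field ncpoly)"
  by (simp add: ncsubst_var tau_def ncconst_eq flip: one_eq)

lemma qq_tau: "ncsubst tau (qq (Suc n)) = qq (Suc n) + of_nat (Suc n) * (qq n :: 'k::field ncpoly)"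
proof (induction n)
  case 0 then show ?case by (simp add: ncsubst_mult ncsubst_diff ncsubst_one tau_Y)
next
  case (Suc n)
  have e: "ncvar X3 + 1 - of_nat (Suc n) = ncvar X3 - (of_nat n :: 'k ncpoly)"
    by (simp only: of_nat_Suc) (simp add: algebra_simps)
  have "ncsubst tau (qq (Suc (Suc n))) = ncsubst tau (qq (Suc n)) * (ncvar X3 + 1 - of_nat (Suc n))"
    by (simp only: qq.simps(2)[of "Suc n"] ncsubst_mult ncsubst_diff tau_Y ncsubst_of_nat)
  also have "\<dots> = (qq (Suc n) + of_nat (Suc n) * qq n) * (ncvar X3 - (of_nat n :: 'k ncpoly))"
    by (simp only: Suc.IH e)
  also have "\<dots> = qq (Suc n) * (ncvar X3 - of_nat n) + of_nat (Suc n) * qq (Suc n)"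
    by (simp only: distrib_right mult.assoc qq.simps(2)[of n])
  also have "\<dots> = qq (Suc (Suc n)) + of_nat (Suc (Suc n)) * (qq (Suc n) :: 'k ncpoly)"
  proof -
    have "qq (Suc n) * (of_nat (Suc n) :: 'k ncpoly) = of_nat (Suc n) * qq (Suc n)"
      by (rule mult_of_nat_commute[symmetric])
    then show ?thesis by (simp add: algebra_simps del: of_nat_Suc) (simp add: algebra_simps)
  qed
  finally show ?case .
qed


lemma mult_right_var_expand:
  "p * Poly_Mapping.single [v] 1 = (\<Sum>u\<in>Poly_Mapping.keys p. Poly_Mapping.single (u @ [v]) (Poly_Mapping.lookup p u :: 'k::field))"
  by (subst pm_expand[of p]) (simp add: sum_distrib_right mult_single_list)

lemma lookup_right_var: "Poly_Mapping.lookup (p * Poly_Mapping.single [v] 1) (w @ [v]) = Poly_Mapping.lookup (p::'k::field ncpoly) w"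
  by (simp add: mult_right_var_expand lookup_sum lookup_single when_def sum.delta in_keys_iff)

lemma lookup_left_var: assumes "v \<noteq> v'"
  shows "Poly_Mapping.lookup (Poly_Mapping.single [v] 1 * p) (v' # w) = (0::'k::field)"
proof -
  have "Poly_Mapping.single [v] 1 * p = (\<Sum>u\<in>Poly_Mapping.keys p. Poly_Mapping.single (v # u) (Poly_Mapping.lookup p u :: 'k))"
    by (subst pm_expand[of p]) (simp add: sum_distrib_left mult_single_list)
  then show ?thesis using assms by (simp add: lookup_sum lookup_single when_def)
qed

lemma lookup_left_const:
  "Poly_Mapping.lookup (Poly_Mapping.single [] s * p) w = s * Poly_Mapping.lookup p (w::var list)"
  for s :: "'k::field"
proof -
  have "Poly_Mapping.single [] s * p = (\<Sum>u\<in>Poly_Mapping.keys p. Poly_Mapping.single u (s * Poly_Mapping.lookup p u :: 'k))"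
    by (subst pm_expand[of p]) (simp add: sum_distrib_left mult_single_list)
  then show ?thesis by (simp add: lookup_sum lookup_single when_def sum.delta in_keys_iff)
qed

lemma cc_coef: "k \<ge> 1 \<Longrightarrow> Poly_Mapping.lookup (cc k :: 'k::field ncpoly) (X2 # replicate k X3) = 1"
proof (induction k rule: cc.induct)
  case 1 then show ?case by simp
next
  case 2
  show ?case
    by (simp add: nccomm_eq ncvar_def mult_single_list lookup_minus lookup_single)
next
  case (3 k)
  have w: "X2 # replicate (Suc (Suc k)) X3 = (X2 # replicate (Suc k) X3) @ [X3]"
    by (simp add: replicate_append_same)
  have "Poly_Mapping.lookup (cc (Suc (Suc k)) :: 'k ncpoly) (X2 # replicate (Suc (Suc k)) X3)
      = Poly_Mapping.lookup (cc (Suc k) * Poly_Mapping.single [X3] 1) ((X2 # replicate (Suc k) X3) @ [X3])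
      - Poly_Mapping.lookup (Poly_Mapping.single [X3] 1 * (cc (Suc k) :: 'k ncpoly)) (X2 # (replicate (Suc k) X3 @ [X3]))"
    by (simp only: cc.simps nccomm_eq ncvar_def lookup_minus w append_Cons)
  also have "\<dots> = 1"
  proof -
    have "Poly_Mapping.lookup (Poly_Mapping.single [X3] 1 * (cc (Suc k) :: 'k ncpoly)) (X2 # (replicate (Suc k) X3 @ [X3])) = 0"
      by (rule lookup_left_var) simp
    moreover have "Poly_Mapping.lookup (cc (Suc k) * Poly_Mapping.single [X3] 1) ((X2 # replicate (Suc k) X3) @ [X3]) = (1::'k)"
      using 3 by (simp only: lookup_right_var)
    ultimately show ?thesis by simp
  qed
  finally show ?case .
qed

lemma cc_nonzero: "k \<ge> 1 \<Longrightarrow> (cc k :: 'k::field ncpoly) \<noteq> 0"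
  using cc_coef[of k, where 'k='k] by force

lemma of_nat_mult_zero: "0 < a \<Longrightarrow> of_nat a * p = (0::'k::field_char_0 ncpoly) \<Longrightarrow> p = 0"
proof -
  assume a: "0 < a" and z: "of_nat a * p = 0"
  have "(of_nat a :: 'k ncpoly) = Poly_Mapping.single [] (of_nat a)"
    by (simp add: list_zero_eq[symmetric])
  then have "of_nat a * Poly_Mapping.lookup p w = 0" for w
    using z lookup_left_const[of "of_nat a" p w] by simp
  then have "Poly_Mapping.lookup p w = 0" for w using a by simp
  then show "p = 0" by (simp add: poly_mapping_eq_iff fun_eq_iff)
qed

lemma Sm_step: "p \<in> Sm (Suc j) \<Longrightarrow> \<sigma> \<in> Vgrp \<Longrightarrow> ncsubst \<sigma> p - p \<in> (if j = 0 then {0} else Sm j)"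
  by (cases j) auto

lemma ring_aux: "(c::'a::ring) * N = N * c \<Longrightarrow>
   A * (c * (q + N * r) - (q + N * r) * c) - A * (c * q - q * c) = (A * N) * (c * r - r * c)"
proof -
  assume h: "c * N = N * c"
  have "c * (N * r) = N * (c * r)" by (metis h mult.assoc)
  then show ?thesis by (simp add: algebra_simps)
qed

lemma diff_tau:
  assumes "k \<ge> 1"
  shows "ncsubst tau (of_nat a * nccomm (cc k) (qq (Suc (Suc n)))) - of_nat a * nccomm (cc k) (qq (Suc (Suc n)))
     = of_nat (a * Suc (Suc n)) * nccomm (cc k) (qq (Suc n) :: 'k::field ncpoly)"
proof -
  have ck: "ncsubst tau (cc k) = (cc k :: 'k ncpoly)"
    by (rule cc_fix[of tau 0 1]) (use assms in \<open>simp_all add: tau_def\<close>)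
  have c: "cc k * of_nat (Suc (Suc n)) = of_nat (Suc (Suc n)) * (cc k :: 'k ncpoly)"
    by (rule mult_of_nat_commute[symmetric])
  show ?thesis
    apply (simp only: ncsubst_mult ncsubst_of_nat ncsubst_comm ck qq_tau)
    apply (simp only: nccomm_eq of_nat_mult)
    using ring_aux[OF c] by simp
qed

lemma key: "k \<ge> 1 \<Longrightarrow> 0 < a \<Longrightarrow>
   of_nat a * nccomm (cc k) (qq (Suc n)) \<in> (if n = 0 then {0} else Sm n :: 'k::field_char_0 ncpoly set) \<Longrightarrow> False"
proof (induction n arbitrary: a)
  case 0
  obtain j where j: "k = Suc j" using 0 by (cases k) auto
  have "nccomm (cc k) (qq (Suc 0)) = (cc (Suc k) :: 'k ncpoly)"
    using j 0 by (cases j) simp_all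
  then have "cc (Suc k) = (0 :: 'k ncpoly)"
    using 0 of_nat_mult_zero[of a "cc (Suc k)"] by simp
  then show False using cc_nonzero[of "Suc k", where 'k='k] by simp
next
  case (Suc n)
  have "ncsubst tau (of_nat a * nccomm (cc k) (qq (Suc (Suc n)))) - of_nat a * nccomm (cc k) (qq (Suc (Suc n)))
     \<in> (if n = 0 then {0} else Sm n :: 'k ncpoly set)"
    by (rule Sm_step) (use Suc.prems in \<open>simp_all add: tau_V\<close>)
  then have "of_nat (a * Suc (Suc n)) * nccomm (cc k) (qq (Suc n)) \<in> (if n = 0 then {0} else Sm n :: 'k ncpoly set)"
    by (simp only: diff_tau[OF Suc.prems(1)])
  then show False using Suc.IH[of "a * Suc (Suc n)"] Suc.prems by simp
qed

theorem proposition1: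
  fixes k m :: nat
  assumes "k \<ge> 1" and "m \<ge> 1"
  shows "nccomm (cc k :: 'k::field_char_0 ncpoly) (ncvar X2) \<notin> Sm m"
proof
  assume f: "nccomm (cc k :: 'k::field_char_0 ncpoly) (ncvar X2) \<in> Sm m"
  obtain n where n: "m = Suc n" using assms by (cases m) auto
  have ck: "ncsubst (phi (Suc n)) (cc k) = (cc k :: 'k ncpoly)"
    by (rule cc_fix[of "phi (Suc n)" "qq (Suc n)" 0]) (use assms qq_Y in \<open>simp_all add: phi_def del: qq.simps\<close>)
  have "ncsubst (phi (Suc n)) (nccomm (cc k) (ncvar X2)) - nccomm (cc k) (ncvar X2)
     \<in> (if n = 0 then {0} else Sm n :: 'k ncpoly set)"
    by (rule Sm_step) (use f n phi_V in auto)
  moreover have "ncsubst (phi (Suc n)) (nccomm (cc k) (ncvar X2)) - nccomm (cc k) (ncvar X2)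
     = of_nat 1 * nccomm (cc k) (qq (Suc n) :: 'k ncpoly)"
    apply (simp only: ncsubst_comm ck ncsubst_var)
    apply (simp add: phi_def nccomm_eq algebra_simps del: qq.simps)
    done
  ultimately show False using key[of k 1 n] assms by simp
qed

end
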